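(* Let $f\colon X\to Y$ be a perfect map between metrizable spaces, $d$ a compatible metric on $X$, and $(M,\varrho)$ a complete metric space. For every closed $H\subset Y$ and all $m,n\ge1$, the set $\mathcal{K}(m,n,H)$ is open in $C(X,M)$ with respect to the source limitation topology.
   Context: For $A\subset X$, $\delta>0$, $B(A,\delta)=\{x\in X:d(x,A)<\delta\}$. $C(x,g|f^{-1}(y))$ is the component of $g^{-1}(g(x))\cap f^{-1}(y)$ containing $x$. $\mathcal{K}(m,n,y)$ is the set of $g\in C(X,M)$ such that for every subcontinuum $L\subset f^{-1}(y)$ with $\operatorname{diam}g(L)\ge1/n$ there is $x\in L$ with $C(x,g|f^{-1}(y))\subset B(L,1/m)$; $\mathcal{K}(m,n,H)=\bigcap_{y\in H}\mathcal{K}(m,n,y)$. The source limitation topology on $C(X,M)$ has base at $g$ the sets $\{g':\varrho(g'(x),g(x))<\varepsilon(x)\ \forall x\}$ with $\varepsilon\colon X\to(0,1]$ continuous. *)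

theory Defs
  imports "HOL-Analysis.Analysis"
begin

text \<open>X, Y are metrizable spaces represented by metric-space types (their metric is
  a compatible metric); M is a complete metric space type. C(X,M) is the set of
  continuous maps.\<close>

definition cmaps :: "('a::topological_space \<Rightarrow> 'c::topological_space) set" where
  "cmaps = {g. continuous_on UNIV g}"

definition perfect_map :: "('a::topological_space \<Rightarrow> 'b::topological_space) \<Rightarrow> bool" where
  "perfect_map f \<longleftrightarrow> continuous_on UNIV f \<and> (\<forall>S. closed S \<longrightarrow> closed (f ` S))
     \<and> (\<forall>y. compact (f -` {y}))"

definition nbhd :: "'a::metric_space set \<Rightarrow> real \<Rightarrow> 'a set" where
  "nbhd A \<delta> = {x. infdist x A < \<delta>}"

definition comp_fib :: "'a::metric_space \<Rightarrow> ('a \<Rightarrow> 'c) \<Rightarrow> ('a \<Rightarrow> 'b) \<Rightarrow> 'b \<Rightarrow> 'a set" where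
  "comp_fib x g f y = connected_component_set (g -` {g x} \<inter> f -` {y}) x"

definition subcontinuum :: "'a::topological_space set \<Rightarrow> bool" where
  "subcontinuum L \<longleftrightarrow> L \<noteq> {} \<and> compact L \<and> connected L"

definition Kset :: "('a::metric_space \<Rightarrow> 'b) \<Rightarrow> nat \<Rightarrow> nat \<Rightarrow> 'b \<Rightarrow> ('a \<Rightarrow> 'c::metric_space) set" where
  "Kset f m n y = {g \<in> cmaps. \<forall>L. subcontinuum L \<and> L \<subseteq> f -` {y} \<and> diameter (g ` L) \<ge> 1 / real n
      \<longrightarrow> (\<exists>x\<in>L. comp_fib x g f y \<subseteq> nbhd L (1 / real m))}"

definition KsetH :: "('a::metric_space \<Rightarrow> 'b) \<Rightarrow> nat \<Rightarrow> nat \<Rightarrow> 'b set \<Rightarrow> ('a \<Rightarrow> 'c::metric_space) set" where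
  "KsetH f m n H = cmaps \<inter> (\<Inter>y\<in>H. Kset f m n y)"

definition sl_ball :: "('a::metric_space \<Rightarrow> 'c::metric_space) \<Rightarrow> ('a \<Rightarrow> real) \<Rightarrow> ('a \<Rightarrow> 'c) set" where
  "sl_ball g \<epsilon> = {g' \<in> cmaps. \<forall>x. dist (g' x) (g x) < \<epsilon> x}"

definition source_limitation_topology :: "('a::metric_space \<Rightarrow> 'c::metric_space) topology" where
  "source_limitation_topology = topology_generated_by
     {sl_ball g \<epsilon> | g \<epsilon>. g \<in> cmaps \<and> continuous_on UNIV \<epsilon> \<and> (\<forall>x. 0 < \<epsilon> x \<and> \<epsilon> x \<le> 1)}"

end

theory Submission
  imports Defs
begin

lemma subsequence_diagonalization_lemma:
  fixes P :: "nat \<Rightarrow> (nat \<Rightarrow> 'a) \<Rightarrow> bool"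
  assumes sub: "\<And>i r. \<exists>k. strict_mono (k :: nat \<Rightarrow> nat) \<and> P i (r \<circ> k)"
      and P_P:  "\<And>i r::nat \<Rightarrow> 'a. \<And>k1 k2 N.
                   \<lbrakk>P i (r \<circ> k1); \<And>j. N \<le> j \<Longrightarrow> \<exists>j'. j \<le> j' \<and> k2 j = k1 j'\<rbrakk> \<Longrightarrow> P i (r \<circ> k2)"
   obtains k where "strict_mono (k :: nat \<Rightarrow> nat)" "\<And>i. P i (r \<circ> k)"
proof -
  obtain kk where "\<And>i r. strict_mono (kk i r :: nat \<Rightarrow> nat) \<and> P i (r \<circ> (kk i r))"
    using sub by metis
  then have sub_kk: "\<And>i r. strict_mono (kk i r)" and P_kk: "\<And>i r. P i (r \<circ> (kk i r))"
    by auto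
  define rr where "rr \<equiv> rec_nat (kk 0 r) (\<lambda>n x. x \<circ> kk (Suc n) (r \<circ> x))"
  then have [simp]: "rr 0 = kk 0 r" "\<And>n. rr(Suc n) = rr n \<circ> kk (Suc n) (r \<circ> rr n)"
    by auto
  show thesis
  proof
    have sub_rr: "strict_mono (rr i)" for i
      using sub_kk  by (induction i) (auto simp: strict_mono_def o_def)
    have P_rr: "P i (r \<circ> rr i)" for i
      using P_kk  by (induction i) (auto simp: o_def)
    have "i \<le> i+d \<Longrightarrow> rr i n \<le> rr (i+d) n" for d i n
    proof (induction d)
      case 0 then show ?case
        by simp
    next
      case (Suc d) then show ?case
        using seq_suble [OF sub_kk] strict_mono_less_eq [OF sub_rr]
        by (simp add: order_subst1)
    qed
    then have "\<And>i j n. i \<le> j \<Longrightarrow> rr i n \<le> rr j n"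
      by (metis le_iff_add)
    show "strict_mono (\<lambda>n. rr n n)"
      unfolding strict_mono_Suc_iff
      by (simp add: Suc_le_lessD strict_monoD strict_mono_imp_increasing sub_kk sub_rr)
    have "\<exists>j. i \<le> j \<and> rr (n+d) i = rr n j" for d n i
    proof (induction d arbitrary: i)
      case (Suc d)
      then show ?case
        using seq_suble [OF sub_kk] by simp (meson order_trans)
    qed auto
    then have "\<And>m n i. n \<le> m \<Longrightarrow> \<exists>j. i \<le> j \<and> rr m i = rr n j"
      by (metis le_iff_add)
    then show "P i (r \<circ> (\<lambda>n. rr n n))" for i
      by (meson P_rr P_P)
  qed
qed

lemma function_convergent_subsequence:
  fixes f :: "[nat,'a] \<Rightarrow> 'b::{real_normed_vector,heine_borel}"
  assumes "countable S" and M: "\<And>n::nat. \<And>x. x \<in> S \<Longrightarrow> norm(f n x) \<le> M"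
   obtains k where "strict_mono (k::nat\<Rightarrow>nat)" "\<And>x. x \<in> S \<Longrightarrow> \<exists>l. (\<lambda>n. f (k n) x) \<longlonglongrightarrow> l"
proof (cases "S = {}")
  case True
  then show ?thesis
    using strict_mono_id that by fastforce
next
  case False
  with \<open>countable S\<close> obtain \<sigma> :: "nat \<Rightarrow> 'a" where \<sigma>: "S = range \<sigma>"
    using uncountable_def by blast
  obtain k where "strict_mono k" and k: "\<And>i. \<exists>l. (\<lambda>n. (f \<circ> k) n (\<sigma> i)) \<longlonglongrightarrow> l"
  proof (rule subsequence_diagonalization_lemma
      [of "\<lambda>i r. \<exists>l. ((\<lambda>n. (f \<circ> r) n (\<sigma> i)) \<longlongrightarrow> l) sequentially" id])
    show "\<exists>k::nat\<Rightarrow>nat. strict_mono k \<and> (\<exists>l. (\<lambda>n. (f \<circ> (r \<circ> k)) n (\<sigma> i)) \<longlonglongrightarrow> l)" for i r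
    proof -
      have "f (r n) (\<sigma> i) \<in> cball 0 M" for n
        by (simp add: \<sigma> M)
      then show ?thesis
        using compact_def [of "cball (0::'b) M"] by (force simp: o_def)
    qed
    show "\<exists>l. (\<lambda>n. (f \<circ> (r \<circ> k2)) n (\<sigma> i)) \<longlonglongrightarrow> l" 
      if "\<exists>l. (\<lambda>n. (f \<circ> (r \<circ> k1)) n (\<sigma> i)) \<longlonglongrightarrow> l" "\<And>j. N \<le> j \<Longrightarrow> \<exists>j'\<ge>j. k2 j = k1 j'"
      for i N and r k1 k2 :: "nat\<Rightarrow>nat"
      using that
      by (simp add: lim_sequentially) (metis (no_types, opaque_lifting) le_cases order_trans)
  qed auto
  with \<sigma> that show ?thesis
    by force
qed

lemma AA_lip:
  fixes F :: "nat \<Rightarrow> 'a::metric_space \<Rightarrow> real"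
  assumes "compact S"
      and M: "\<And>n x. x \<in> S \<Longrightarrow> \<bar>F n x\<bar> \<le> M"
      and lip: "\<And>n x y. x \<in> S \<Longrightarrow> y \<in> S \<Longrightarrow> \<bar>F n x - F n y\<bar> \<le> dist x y"
  obtains g k where "strict_mono (k :: nat \<Rightarrow> nat)"
                    "\<And>e. 0 < e \<Longrightarrow> \<exists>N. \<forall>n x. n \<ge> N \<and> x \<in> S \<longrightarrow> \<bar>F (k n) x - g x\<bar> < e"
proof -
  have "\<exists>T. T \<subseteq> S \<and> finite T \<and> S \<subseteq> (\<Union>c\<in>T. ball c (1 / (Suc i)))" for i
  proof (rule compactE_image [OF \<open>compact S\<close>, of S "(\<lambda>x. ball x (1 / (Suc i)))"])
    show "S \<subseteq> (\<Union>c\<in>S. ball c (1 / (Suc i)))"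
    proof
      fix x assume "x \<in> S" then show "x \<in> (\<Union>c\<in>S. ball c (1 / (Suc i)))"
        by (intro UN_I[of x]) auto
    qed
  qed auto
  then obtain TT where TT: "\<And>i. TT i \<subseteq> S" "\<And>i. finite (TT i)"
      "\<And>i. S \<subseteq> (\<Union>c\<in>TT i. ball c (1 / (Suc i)))"
    by metis
  define R where "R = (\<Union>i. TT i)"
  have "countable R" unfolding R_def using TT(2) by (simp add: countable_finite)
  have "R \<subseteq> S" using TT(1) R_def by auto
  obtain k where "strict_mono k" and k: "\<And>x. x \<in> R \<Longrightarrow> \<exists>l. (\<lambda>n. F (k n) x) \<longlonglongrightarrow> l"
  proof (rule function_convergent_subsequence [OF \<open>countable R\<close>, of F M])
    show "\<And>n x. x \<in> R \<Longrightarrow> norm (F n x) \<le> M" using \<open>R \<subseteq> S\<close> M by auto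
  qed auto
  then have Cauchy: "Cauchy ((\<lambda>n. F (k n) x))" if "x \<in> R" for x
    using convergent_eq_Cauchy that by blast
  have "\<exists>N. \<forall>m n x. N \<le> m \<and> N \<le> n \<and> x \<in> S \<longrightarrow> dist ((F \<circ> k) m x) ((F \<circ> k) n x) < e"
    if "0 < e" for e
  proof -
    obtain i where i: "1 / Suc i < e/3"
      using \<open>0 < e\<close> by (metis divide_pos_pos nat_approx_posE of_nat_Suc zero_less_numeral)
    define T where "T = TT i"
    have "T \<subseteq> R" "finite T" and T: "S \<subseteq> (\<Union>c\<in>T. ball c (1 / Suc i))"
      using TT R_def T_def by auto
    have "\<exists>M. \<forall>m\<ge>M. \<forall>n\<ge>M. dist (F (k m) x) (F (k n) x) < e/3" if "x \<in> R" for x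
      using Cauchy \<open>0 < e\<close> that unfolding Cauchy_def
      by (metis less_divide_eq_numeral1(1) mult_zero_left)
    then obtain MF where MF: "\<And>x m n. \<lbrakk>x \<in> R; m \<ge> MF x; n \<ge> MF x\<rbrakk> \<Longrightarrow> dist (F (k m) x) (F (k n) x) < e/3"
      by metis
    have "dist ((F \<circ> k) m x) ((F \<circ> k) n x) < e"
         if m: "Max (MF ` T) \<le> m" and n: "Max (MF ` T) \<le> n" "x \<in> S" for m n x
    proof -
      obtain t where "t \<in> T" and t: "dist t x < 1 / Suc i"
        using \<open>x \<in> S\<close> T by auto
      have tS: "t \<in> S" using \<open>t \<in> T\<close> \<open>T \<subseteq> R\<close> \<open>R \<subseteq> S\<close> by auto
      have "\<bar>F (k m) t - F (k m) x\<bar> < e / 3"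
        using lip[OF tS \<open>x \<in> S\<close>, of "k m"] t i by linarith
      moreover
      have "\<bar>F (k n) t - F (k n) x\<bar> < e / 3"
        using lip[OF tS \<open>x \<in> S\<close>, of "k n"] t i by linarith
      moreover
      have "dist (F (k m) t) (F (k n) t) < e / 3"
      proof (rule MF)
        show "t \<in> R"
          using \<open>T \<subseteq> R\<close> \<open>t \<in> T\<close> by blast
        show "MF t \<le> m" "MF t \<le> n"
          by (meson Max_ge \<open>finite T\<close> \<open>t \<in> T\<close> finite_imageI imageI le_trans m n)+
      qed
      ultimately
      show ?thesis
        unfolding o_def dist_real_def by linarith
    qed
    then show ?thesis
      by force
  qed
  then obtain g where "\<forall>e>0. \<exists>N. \<forall>n x. N \<le> n \<and> x \<in> S \<longrightarrow> dist ((F \<circ> k) n x) (g x) < e"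
    using uniformly_convergent_eq_cauchy [of "\<lambda>x. x \<in> S" "F \<circ> k"] by blast
  then show thesis
    using \<open>strict_mono k\<close> that[of k g] by (auto simp: dist_real_def)
qed

lemma infdist_lessE:
  assumes "A \<noteq> {}" "infdist x A < e"
  obtains a where "a \<in> A" "dist x a < e"
proof -
  have "(INF a\<in>A. dist x a) < e" using assms by (simp add: infdist_notempty)
  then obtain a where "a \<in> A" "dist x a < e"
    using cINF_less_iff[of A "dist x" e] assms(1) by (auto intro: bdd_belowI[of _ 0])
  then show thesis using that by blast
qed

lemma le_by_eps:
  fixes a b :: real
  assumes "\<And>e. e > 0 \<Longrightarrow> a < b + e"
  shows "a \<le> b"
  using assms[of "a - b"] by (cases "a \<le> b") auto

lemma hlim:
  fixes S :: "nat \<Rightarrow> 'a::metric_space set"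
  assumes T: "compact T" and ST: "\<And>k. S k \<subseteq> T" and Sc: "\<And>k. compact (S k)"
    and Sne: "\<And>k. S k \<noteq> {}"
  obtains r L where "strict_mono (r :: nat \<Rightarrow> nat)" "compact L" "L \<noteq> {}" "L \<subseteq> T"
    "\<And>\<eta>. \<eta> > 0 \<Longrightarrow> \<exists>N. \<forall>k\<ge>N. S (r k) \<subseteq> nbhd L \<eta>"
    "\<And>\<eta>. \<eta> > 0 \<Longrightarrow> \<exists>N. \<forall>k\<ge>N. \<forall>x\<in>L. infdist x (S (r k)) < \<eta>"
    "(\<And>k. connected (S k)) \<Longrightarrow> connected L"
    "\<And>x. x \<in> T \<Longrightarrow> (\<And>e N. e > 0 \<Longrightarrow> \<exists>k\<ge>N. infdist x (S (r k)) < e) \<Longrightarrow> x \<in> L"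
proof -
  obtain M where M: "\<And>x y. x \<in> T \<Longrightarrow> y \<in> T \<Longrightarrow> dist x y \<le> M"
    using compact_imp_bounded[OF T] bounded_two_points by metis
  define F where "F k x = infdist x (S k)" for k x
  have FM: "\<bar>F k x\<bar> \<le> M" if "x \<in> T" for k x
  proof -
    obtain a where a: "a \<in> S k" using Sne by blast
    have "F k x \<le> dist x a" unfolding F_def by (rule infdist_le[OF a])
    also have "\<dots> \<le> M" using M[OF that] a ST by blast
    finally show ?thesis by (simp add: F_def infdist_nonneg)
  qed
  have Flip: "\<bar>F k x - F k y\<bar> \<le> dist x y" for k x y
    unfolding F_def by (rule infdist_triangle_abs)
  have "\<exists>r d. strict_mono (r :: nat \<Rightarrow> nat) \<and> (\<forall>e>0. \<exists>N. \<forall>n x. n \<ge> N \<and> x \<in> T \<longrightarrow> \<bar>F (r n) x - d x\<bar> < e)"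
  proof (rule AA_lip[OF T, of F M])
    show "\<And>n x. x \<in> T \<Longrightarrow> \<bar>F n x\<bar> \<le> M" by (rule FM)
    show "\<And>n x y. x \<in> T \<Longrightarrow> y \<in> T \<Longrightarrow> \<bar>F n x - F n y\<bar> \<le> dist x y" by (rule Flip)
  qed blast
  then obtain d and r :: "nat \<Rightarrow> nat" where r: "strict_mono r"
    and unif: "\<And>e. 0 < e \<Longrightarrow> \<exists>N. \<forall>n x. n \<ge> N \<and> x \<in> T \<longrightarrow> \<bar>F (r n) x - d x\<bar> < e"
    by blast
  have dnn: "d x \<ge> 0" if xT: "x \<in> T" for x
  proof (rule ccontr)
    assume "\<not> d x \<ge> 0"
    then obtain N where "\<forall>n. n \<ge> N \<longrightarrow> \<bar>F (r n) x - d x\<bar> < - d x"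
      using unif[of "- d x"] xT by force
    then have "\<bar>F (r N) x - d x\<bar> < - d x" by auto
    moreover have "F (r N) x \<ge> 0" by (simp add: F_def infdist_nonneg)
    ultimately show False by linarith
  qed
  have dlip: "\<bar>d x - d y\<bar> \<le> dist x y" if "x \<in> T" "y \<in> T" for x y
  proof (rule le_by_eps)
    fix e :: real assume "e > 0"
    then obtain N where N: "\<forall>n x. n \<ge> N \<and> x \<in> T \<longrightarrow> \<bar>F (r n) x - d x\<bar> < e/2"
      using unif[of "e/2"] \<open>e > 0\<close> by force
    have "\<bar>F (r N) x - d x\<bar> < e/2" "\<bar>F (r N) y - d y\<bar> < e/2" using N that by auto
    moreover have "\<bar>F (r N) x - F (r N) y\<bar> \<le> dist x y" by (rule Flip)
    ultimately show "\<bar>d x - d y\<bar> < dist x y + e" by linarith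
  qed
  have dcont: "continuous_on T d"
    unfolding continuous_on_iff
  proof (intro ballI allI impI)
    fix x e assume "x \<in> T" "(0::real) < e"
    show "\<exists>d'>0. \<forall>x'\<in>T. dist x' x < d' \<longrightarrow> dist (d x') (d x) < e"
      using dlip \<open>x \<in> T\<close> \<open>0 < e\<close> by (intro exI[of _ e]) (force simp: dist_real_def)
  qed
  define L where "L = {x \<in> T. d x = 0}"
  have "closed L" unfolding L_def
    by (rule continuous_closed_preimage_constant[OF dcont compact_imp_closed[OF T]])
  have LT: "L \<subseteq> T" unfolding L_def by auto
  have cL: "compact L"
    using compact_Int_closed[OF T \<open>closed L\<close>] LT by (simp add: Int_absorb1)
  have Tne: "T \<noteq> {}" using ST Sne by blast
  have Lne: "L \<noteq> {}"
  proof -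
    obtain p where p: "p \<in> T" "\<And>y. y \<in> T \<Longrightarrow> d p \<le> d y"
      using continuous_attains_inf[OF T Tne dcont] by blast
    have "d p \<le> 0"
    proof (rule le_by_eps)
      fix e :: real assume "e > 0"
      then obtain N where N: "\<forall>n x. n \<ge> N \<and> x \<in> T \<longrightarrow> \<bar>F (r n) x - d x\<bar> < e"
        using unif[OF \<open>e > 0\<close>] by blast
      obtain q where q: "q \<in> S (r N)" using Sne by blast
      have "F (r N) q = 0" using q by (simp add: F_def)
      moreover have "q \<in> T" using q ST by blast
      ultimately have "d q < e" using N by force
      then show "d p < 0 + e" using p(2)[OF \<open>q \<in> T\<close>] by simp
    qed
    then have "p \<in> L" using dnn[OF p(1)] p(1) by (simp add: L_def)
    then show ?thesis by blast
  qed
  have F5: "\<exists>N. \<forall>k\<ge>N. S (r k) \<subseteq> nbhd L \<eta>" if "\<eta> > 0" for \<eta>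
  proof -
    define T' where "T' = T \<inter> {x. \<eta> \<le> infdist x L}"
    have "closed {x. \<eta> \<le> infdist x L}"
      by (rule closed_Collect_le) (auto intro!: continuous_intros)
    then have cT': "compact T'" unfolding T'_def using T by blast
    show ?thesis
    proof (cases "T' = {}")
      case True
      then show ?thesis using ST unfolding T'_def nbhd_def by (force simp: not_le)
    next
      case False
      obtain p where p: "p \<in> T'" "\<And>y. y \<in> T' \<Longrightarrow> d p \<le> d y"
        using continuous_attains_inf[OF cT' False continuous_on_subset[OF dcont]] T'_def by blast
      have "p \<notin> L" using p(1) that unfolding T'_def by auto
      then have dp: "d p > 0" using dnn[of p] p(1) unfolding T'_def L_def by force
      obtain N where N: "\<forall>n x. n \<ge> N \<and> x \<in> T \<longrightarrow> \<bar>F (r n) x - d x\<bar> < d p"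
        using unif[OF dp] by blast
      have "S (r k) \<subseteq> nbhd L \<eta>" if "k \<ge> N" for k
      proof
        fix x assume x: "x \<in> S (r k)"
        then have xT: "x \<in> T" using ST by blast
        have "F (r k) x = 0" using x by (simp add: F_def)
        then have "d x < d p" using N xT that by force
        then have "x \<notin> T'" using p(2) by force
        then show "x \<in> nbhd L \<eta>" using xT unfolding T'_def nbhd_def by auto
      qed
      then show ?thesis by blast
    qed
  qed
  have F6: "\<exists>N. \<forall>k\<ge>N. \<forall>x\<in>L. infdist x (S (r k)) < \<eta>" if "\<eta> > 0" for \<eta>
  proof -
    obtain N where N: "\<forall>n x. n \<ge> N \<and> x \<in> T \<longrightarrow> \<bar>F (r n) x - d x\<bar> < \<eta>"
      using unif[OF \<open>\<eta> > 0\<close>] by blast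
    show ?thesis using N unfolding L_def F_def by (intro exI[of _ N]) force
  qed
  have F2: "x \<in> L" if x: "x \<in> T" and fr: "\<And>e N. e > 0 \<Longrightarrow> \<exists>k\<ge>N. infdist x (S (r k)) < e" for x
  proof (rule ccontr)
    assume "x \<notin> L"
    then have dx: "d x > 0" using dnn[OF x] x unfolding L_def by force
    have "d x / 2 > 0" using dx by simp
    from unif[OF this] obtain N where N: "\<forall>n y. n \<ge> N \<and> y \<in> T \<longrightarrow> \<bar>F (r n) y - d y\<bar> < d x / 2"
      by blast
    obtain k where k: "k \<ge> N" "infdist x (S (r k)) < d x / 2" using fr[of "d x / 2" N] dx by auto
    have "\<bar>F (r k) x - d x\<bar> < d x / 2" using N k x by auto
    then show False using k(2) unfolding F_def by linarith
  qed
  have Fconn: "connected L" if conn: "\<And>k. connected (S k)"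
  proof (rule ccontr)
    assume "\<not> connected L"
    then obtain A B where AB: "closed A" "closed B" "L \<subseteq> A \<union> B" "A \<inter> B \<inter> L = {}"
      "A \<inter> L \<noteq> {}" "B \<inter> L \<noteq> {}"
      unfolding connected_closed by blast
    define A' where "A' = A \<inter> L"
    define B' where "B' = B \<inter> L"
    have cA': "compact A'" unfolding A'_def using compact_Int_closed[OF cL AB(1)] by (simp add: Int_commute)
    have cB': "compact B'" unfolding B'_def using compact_Int_closed[OF cL AB(2)] by (simp add: Int_commute)
    have A'ne: "A' \<noteq> {}" and B'ne: "B' \<noteq> {}" using AB A'_def B'_def by auto
    obtain a0 where a0: "a0 \<in> A'" "\<And>y. y \<in> A' \<Longrightarrow> infdist a0 B' \<le> infdist y B'"
    proof -
      have "continuous_on A' (\<lambda>y. infdist y B')" by (intro continuous_intros)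
      then show ?thesis using continuous_attains_inf[OF cA' A'ne, of "\<lambda>y. infdist y B'"] that by blast
    qed
    define \<delta> where "\<delta> = infdist a0 B'"
    have "a0 \<notin> B'" using a0(1) AB(4) A'_def B'_def by auto
    then have \<delta>pos: "\<delta> > 0" unfolding \<delta>_def
      using infdist_pos_not_in_closed[OF compact_imp_closed[OF cB'] B'ne] by blast
    have sep: "dist a b \<ge> \<delta>" if "a \<in> A'" "b \<in> B'" for a b
      using a0(2)[OF that(1)] infdist_le[OF that(2), of a] unfolding \<delta>_def by linarith
    define U where "U = nbhd A' (\<delta>/2)"
    define V where "V = nbhd B' (\<delta>/2)"
    have oU: "open U" unfolding U_def nbhd_def
      by (rule open_Collect_less) (auto intro!: continuous_intros)
    have oV: "open V" unfolding V_def nbhd_def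
      by (rule open_Collect_less) (auto intro!: continuous_intros)
    have UV: "U \<inter> V = {}"
    proof (rule ccontr)
      assume "U \<inter> V \<noteq> {}"
      then obtain x where "infdist x A' < \<delta>/2" "infdist x B' < \<delta>/2"
        unfolding U_def V_def nbhd_def by auto
      then obtain a b where "a \<in> A'" "dist x a < \<delta>/2" "b \<in> B'" "dist x b < \<delta>/2"
        using infdist_lessE A'ne B'ne by metis
      moreover have "dist a b \<le> dist x a + dist x b" by (metis dist_commute dist_triangle)
      ultimately show False using sep by fastforce
    qed
    obtain N1 where N1: "\<forall>k\<ge>N1. S (r k) \<subseteq> nbhd L (\<delta>/2)" using F5[of "\<delta>/2"] \<delta>pos by auto
    obtain N2 where N2: "\<forall>k\<ge>N2. \<forall>x\<in>L. infdist x (S (r k)) < \<delta>/2" using F6[of "\<delta>/2"] \<delta>pos by auto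
    define k where "k = max N1 N2"
    have sub: "S (r k) \<subseteq> U \<union> V"
    proof
      fix x assume "x \<in> S (r k)"
      moreover have "S (r k) \<subseteq> nbhd L (\<delta>/2)" using N1 unfolding k_def by auto
      ultimately have "infdist x L < \<delta>/2" unfolding nbhd_def by blast
      then obtain l where l: "l \<in> L" "dist x l < \<delta>/2" using infdist_lessE Lne by metis
      then have "l \<in> A' \<or> l \<in> B'" using AB(3) A'_def B'_def by auto
      then show "x \<in> U \<union> V"
        using l infdist_le2[of l _ x "dist x l"] unfolding U_def V_def nbhd_def by fastforce
    qed
    have "U \<inter> S (r k) \<noteq> {}"
    proof -
      obtain a where a: "a \<in> A'" using A'ne by blast
      then have "infdist a (S (r k)) < \<delta>/2" using N2 A'_def unfolding k_def by auto
      then obtain q where "q \<in> S (r k)" "dist a q < \<delta>/2" using infdist_lessE Sne by metis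
      then have "q \<in> U" using infdist_le[OF a, of q] unfolding U_def nbhd_def
        by (auto simp: dist_commute)
      then show ?thesis using \<open>q \<in> S (r k)\<close> by blast
    qed
    moreover have "V \<inter> S (r k) \<noteq> {}"
    proof -
      obtain a where a: "a \<in> B'" using B'ne by blast
      then have "infdist a (S (r k)) < \<delta>/2" using N2 B'_def unfolding k_def by auto
      then obtain q where "q \<in> S (r k)" "dist a q < \<delta>/2" using infdist_lessE Sne by metis
      then have "q \<in> V" using infdist_le[OF a, of q] unfolding V_def nbhd_def
        by (auto simp: dist_commute)
      then show ?thesis using \<open>q \<in> S (r k)\<close> by blast
    qed
    ultimately show False using connectedD[OF conn oU oV _ sub] UV by auto
  qed
  show thesis
    using that[OF r cL Lne LT F5 F6 Fconn F2] by blast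
qed

lemma perfect_compact_preimage:
  fixes f :: "'a::metric_space \<Rightarrow> 'b::metric_space"
  assumes pf: "perfect_map f" and lim: "z \<longlonglongrightarrow> y0"
  shows "compact (f -` insert y0 (range z))"
proof -
  have K: "compactin euclidean (insert y0 (range z))"
    using compactin_sequence_with_limit[of euclidean z y0 "range z"] lim by simp
  have pm: "proper_map euclidean euclidean f"
    using pf unfolding proper_map_def closed_map_def perfect_map_def
    by (auto simp: closed_closedin[symmetric] vimage_def)
  have "compactin euclidean {x. x \<in> topspace euclidean \<and> f x \<in> insert y0 (range z)}"
    by (rule compactin_proper_map_preimage[OF pm K])
  then show ?thesis by (simp add: vimage_def)
qed

lemma inv_Suc_le: "N \<le> k \<Longrightarrow> 1 / real (Suc k) \<le> 1 / real (Suc N)"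
  by (simp add: frac_le)

lemma inv_Suc_small: "(e::real) > 0 \<Longrightarrow> \<exists>N. \<forall>k\<ge>N. 1 / real (Suc k) < e"
proof -
  assume "e > 0"
  then obtain N where N: "1 / real (Suc N) < e" by (metis nat_approx_posE of_nat_Suc)
  show ?thesis using N inv_Suc_le by (meson order_le_less_trans)
qed

lemma ev_sub: "strict_mono (r::nat \<Rightarrow> nat) \<Longrightarrow> \<exists>N. \<forall>k\<ge>N. P k \<Longrightarrow> \<exists>N. \<forall>k\<ge>N. P (r k)"
  by (meson order_trans seq_suble)

lemma cont_pt:
  assumes "continuous_on UNIV h" "e > 0"
  obtains d where "d > 0" "\<And>y. dist y x < d \<Longrightarrow> dist (h y) (h x) < e"
  using assms unfolding continuous_on_iff by blast

lemma fiber_compact: "perfect_map f \<Longrightarrow> compact (f -` {y})"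
  by (simp add: perfect_map_def)

lemma comp_fib_compact:
  fixes g :: "'a::metric_space \<Rightarrow> 'c::metric_space" and f :: "'a \<Rightarrow> 'b::metric_space"
  assumes pf: "perfect_map f" and gc: "g \<in> cmaps"
  shows "compact (comp_fib x g f y)"
proof -
  have cf: "continuous_on UNIV f" using pf by (simp add: perfect_map_def)
  have cg: "continuous_on UNIV g" using gc by (simp add: cmaps_def)
  have "closed (g -` {g x})"
    by (rule continuous_closed_vimage) (use cg continuous_on_eq_continuous_at in \<open>auto simp: closed_singleton\<close>)
  moreover have "closed (f -` {y})"
    by (rule continuous_closed_vimage) (use cf continuous_on_eq_continuous_at in \<open>auto simp: closed_singleton\<close>)
  ultimately have "closed (comp_fib x g f y)"
    unfolding comp_fib_def by (intro closed_connected_component closed_Int)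
  moreover have "comp_fib x g f y \<subseteq> f -` {y}"
    unfolding comp_fib_def using connected_component_subset by blast
  ultimately show ?thesis
    using compact_Int_closed[OF fiber_compact[OF pf]] by (metis inf.absorb_iff2)
qed

lemma five_est:
  fixes a b1 b2 b3 b4 b5 q D :: real
  assumes "a \<le> b1 + b2 + b3 + b4 + b5" "b1 < (q - D)/5" "b2 < (q - D)/5" "b3 \<le> D"
    "b4 < (q - D)/5" "b5 < (q - D)/5" "D < q"
  shows "a < q"
  using assms by (simp add: field_simps)

lemma local_lemma:
  fixes f :: "'a::metric_space \<Rightarrow> 'b::metric_space" and g :: "'a \<Rightarrow> 'c::metric_space"
  assumes pf: "perfect_map f" and gc: "g \<in> cmaps" and gK: "g \<in> Kset f m n y0"
    and m1: "m \<ge> 1" and n1: "n \<ge> 1"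
  shows "\<exists>t>0. \<forall>z. dist z y0 < t \<longrightarrow>
           (\<forall>g'\<in>cmaps. (\<forall>x. f x = z \<longrightarrow> dist (g' x) (g x) < t) \<longrightarrow> g' \<in> Kset f m n z)"
proof (rule ccontr)
  assume neg: "\<not> ?thesis"
  have cf: "continuous_on UNIV f" using pf by (simp add: perfect_map_def)
  have cg: "continuous_on UNIV g" using gc by (simp add: cmaps_def)
  have "\<exists>z g'. dist z y0 < 1/Suc k \<and> g' \<in> cmaps \<and> (\<forall>x. f x = z \<longrightarrow> dist (g' x) (g x) < 1/Suc k)
      \<and> g' \<notin> Kset f m n z" for k
  proof -
    have "(1::real)/Suc k > 0" by simp
    then show ?thesis using neg by blast
  qed
  then obtain z G where zd: "\<And>k. dist (z k) y0 < 1/Suc k" and Gc: "\<And>k. G k \<in> cmaps"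
    and Gd: "\<And>k x. f x = z k \<Longrightarrow> dist (G k x) (g x) < 1/Suc k"
    and GK: "\<And>k. G k \<notin> Kset f m n (z k)"
    by metis
  have "\<exists>L. subcontinuum L \<and> L \<subseteq> f -` {z k} \<and> 1 / real n \<le> diameter (G k ` L) \<and>
      (\<forall>x\<in>L. \<not> comp_fib x (G k) f (z k) \<subseteq> nbhd L (1 / real m))" for k
    using GK[of k] Gc[of k] unfolding Kset_def by blast
  then obtain LL where LLs: "\<And>k. subcontinuum (LL k)" and LLf: "\<And>k. LL k \<subseteq> f -` {z k}"
    and LLd: "\<And>k. 1 / real n \<le> diameter (G k ` LL k)"
    and LLc: "\<And>k x. x \<in> LL k \<Longrightarrow> \<not> comp_fib x (G k) f (z k) \<subseteq> nbhd (LL k) (1 / real m)"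
    by metis
  have lim: "z \<longlonglongrightarrow> y0"
  proof (rule metric_LIMSEQ_I)
    fix e :: real assume "e > 0"
    then obtain N where "\<forall>k\<ge>N. 1 / real (Suc k) < e" using inv_Suc_small by blast
    then show "\<exists>N. \<forall>k\<ge>N. dist (z k) y0 < e" using zd by (meson less_trans)
  qed
  define T where "T = f -` insert y0 (range z)"
  have cT: "compact T" unfolding T_def by (rule perfect_compact_preimage[OF pf lim])
  have LLT: "LL k \<subseteq> T" for k using LLf unfolding T_def by auto
  have LLc': "compact (LL k)" "LL k \<noteq> {}" "connected (LL k)" for k
    using LLs unfolding subcontinuum_def by auto
  obtain r L where r: "strict_mono (r::nat\<Rightarrow>nat)" and cL: "compact L" and Lne: "L \<noteq> {}" and LT: "L \<subseteq> T"
    and L5: "\<And>\<eta>. \<eta> > 0 \<Longrightarrow> \<exists>N. \<forall>k\<ge>N. LL (r k) \<subseteq> nbhd L \<eta>"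
    and L6: "\<And>\<eta>. \<eta> > 0 \<Longrightarrow> \<exists>N. \<forall>k\<ge>N. \<forall>x\<in>L. infdist x (LL (r k)) < \<eta>"
    and Lconn: "connected L"
    by (rule hlim[where S=LL and T=T, OF cT LLT LLc'(1) LLc'(2)]) (use LLc'(3) in blast)
  have rinv: "\<exists>N. \<forall>k\<ge>N. 1 / real (Suc (r k)) < e" if "e > 0" for e
    using ev_sub[OF r inv_Suc_small[OF that]] .
  have Lf: "L \<subseteq> f -` {y0}"
  proof
    fix x assume xL: "x \<in> L"
    have "dist (f x) y0 \<le> 0"
    proof (rule le_by_eps)
      fix e :: real assume e: "e > 0"
      obtain d where d: "d > 0" "\<And>y. dist y x < d \<Longrightarrow> dist (f y) (f x) < e/2"
        using cont_pt[OF cf, of "e/2"] e by auto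
      obtain N1 where N1: "\<forall>k\<ge>N1. \<forall>x\<in>L. infdist x (LL (r k)) < d" using L6[OF d(1)] by blast
      obtain N2 where N2: "\<forall>k\<ge>N2. 1 / real (Suc (r k)) < e/2" using rinv[of "e/2"] e by auto
      define k where "k = max N1 N2"
      have "infdist x (LL (r k)) < d" using N1 xL k_def by auto
      note hh = this
      obtain w where w: "w \<in> LL (r k)" "dist x w < d" using infdist_lessE[OF LLc'(2) hh] by blast
      have "f w = z (r k)" using w LLf by auto
      moreover have "dist (f w) (f x) < e/2" using d(2)[of w] w by (simp add: dist_commute)
      moreover have "dist (z (r k)) y0 < e/2" using zd[of "r k"] N2 k_def by (meson max.cobounded2 less_trans)
      ultimately show "dist (f x) y0 < 0 + e"
        using dist_triangle[of "f x" y0 "f w"] dist_commute[of "f x" "f w"] by simp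
    qed
    then show "x \<in> f -` {y0}" by simp
  qed
  have ucg: "uniformly_continuous_on T g"
    by (rule compact_uniformly_continuous[OF continuous_on_subset[OF cg] cT]) auto
  have bgL: "bounded (g ` L)"
    using compact_continuous_image[OF continuous_on_subset[OF cg] cL] compact_imp_bounded by blast
  have Ldiam: "1 / real n \<le> diameter (g ` L)"
  proof (rule ccontr)
    assume nd: "\<not> ?thesis"
    define D where "D = diameter (g ` L)"
    define e where "e = (1 / real n - D) / 5"
    have e: "e > 0" using nd by (simp add: D_def e_def)
    have "\<exists>d>0. \<forall>x\<in>T. \<forall>x'\<in>T. dist x' x < d \<longrightarrow> dist (g x') (g x) < e"
      using ucg e unfolding uniformly_continuous_on_def by blast
    then obtain d where d0: "d > 0" and d1: "\<forall>x\<in>T. \<forall>x'\<in>T. dist x' x < d \<longrightarrow> dist (g x') (g x) < e"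
      by blast
    have d: "d > 0" "\<And>x x'. x \<in> T \<Longrightarrow> x' \<in> T \<Longrightarrow> dist x' x < d \<Longrightarrow> dist (g x') (g x) < e"
      using d0 d1 by auto
    obtain N1 where N1: "\<forall>k\<ge>N1. LL (r k) \<subseteq> nbhd L d" using L5[OF d(1)] by blast
    obtain N2 where N2: "\<forall>k\<ge>N2. 1 / real (Suc (r k)) < e" using rinv[OF e] by blast
    define k where "k = max N1 N2"
    have sub: "LL (r k) \<subseteq> nbhd L d" and small: "1 / real (Suc (r k)) < e"
      using N1 N2 k_def by auto
    have cA: "compact (G (r k) ` LL (r k))"
    proof (rule compact_continuous_image[OF continuous_on_subset LLc'(1)])
      show "continuous_on UNIV (G (r k))" using Gc[of "r k"] by (simp add: cmaps_def)
    qed simp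
    have "G (r k) ` LL (r k) \<noteq> {}" using LLc'(2) by simp
    from diameter_compact_attained[OF cA this]
    obtain a b where ab: "a \<in> LL (r k)" "b \<in> LL (r k)"
      "dist (G (r k) a) (G (r k) b) = diameter (G (r k) ` LL (r k))"
      by fastforce
    have ia: "infdist a L < d" and ib: "infdist b L < d" using sub ab unfolding nbhd_def by auto
    obtain a' where a': "a' \<in> L" "dist a a' < d" using infdist_lessE[OF Lne ia] by blast
    obtain b' where b': "b' \<in> L" "dist b b' < d" using infdist_lessE[OF Lne ib] by blast
    have aT: "a \<in> T" "b \<in> T" "a' \<in> T" "b' \<in> T" using ab a' b' LLT LT by auto
    have fa: "f a = z (r k)" "f b = z (r k)" using ab LLf by auto
    have h1: "dist (G (r k) a) (g a) < e" using Gd[OF fa(1)] small by linarith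
    have h5: "dist (g b) (G (r k) b) < e" using Gd[OF fa(2)] small by (simp add: dist_commute)
    have h2: "dist (g a) (g a') < e" using d(2)[OF aT(3) aT(1)] a' by (simp add: dist_commute)
    have h4: "dist (g b') (g b) < e" using d(2)[OF aT(4) aT(2)] b' by (simp add: dist_commute)
    have h3: "dist (g a') (g b') \<le> D" unfolding D_def
      using diameter_bounded_bound[OF bgL] a'(1) b'(1) by blast
    have h0: "dist (G (r k) a) (G (r k) b) \<le> dist (G (r k) a) (g a) + dist (g a) (g a')
        + dist (g a') (g b') + dist (g b') (g b) + dist (g b) (G (r k) b)"
      using dist_triangle[of "G (r k) a" "G (r k) b" "g a"] dist_triangle[of "g a" "G (r k) b" "g a'"]
        dist_triangle[of "g a'" "G (r k) b" "g b'"] dist_triangle[of "g b'" "G (r k) b" "g b"]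
      by linarith
    have Dq: "D < 1 / real n" using nd D_def by simp
    have "dist (G (r k) a) (G (r k) b) < 1 / real n"
      by (rule five_est[OF h0 h1[unfolded e_def] h2[unfolded e_def] h3 h4[unfolded e_def] h5[unfolded e_def] Dq])
    then show False using LLd[of "r k"] ab(3) by linarith
  qed
  have Lsub: "subcontinuum L" unfolding subcontinuum_def using Lne cL Lconn by auto
  obtain x where xL: "x \<in> L" and Cx: "comp_fib x g f y0 \<subseteq> nbhd L (1 / real m)"
    using gK Lsub Lf Ldiam unfolding Kset_def by blast
  define C where "C = comp_fib x g f y0"
  have cC: "compact C" unfolding C_def by (rule comp_fib_compact[OF pf gc])
  have xy0: "f x = y0" using xL Lf by auto
  have xC: "x \<in> C" unfolding C_def comp_fib_def using xy0 by auto
  obtain c where cC': "c \<in> C" and cmax: "\<And>y. y \<in> C \<Longrightarrow> infdist y L \<le> infdist c L"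
  proof -
    have "continuous_on C (\<lambda>y. infdist y L)" by (intro continuous_intros)
    then show ?thesis using continuous_attains_sup[OF cC _, of "\<lambda>y. infdist y L"] xC that by blast
  qed
  define c0 where "c0 = infdist c L"
  have c0m: "c0 < 1 / real m" using Cx cC' unfolding C_def c0_def nbhd_def by auto
  define \<eta> where "\<eta> = (1 / real m - c0) / 4"
  have \<eta>: "\<eta> > 0" using c0m by (simp add: \<eta>_def)
  have \<eta>3: "c0 + 3 * \<eta> < 1 / real m" using c0m by (simp add: \<eta>_def field_simps)
  have "\<exists>w. w \<in> LL (r k) \<and> dist x w < infdist x (LL (r k)) + 1 / Suc k" for k
  proof -
    have "infdist x (LL (r k)) < infdist x (LL (r k)) + 1 / Suc k" by simp
    from infdist_lessE[OF LLc'(2) this] show ?thesis by blast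
  qed
  then obtain xs where xsL: "\<And>k. xs k \<in> LL (r k)"
    and xsd: "\<And>k. dist x (xs k) < infdist x (LL (r k)) + 1 / Suc k" by metis
  have X1: "\<exists>N. \<forall>k\<ge>N. dist x (xs k) < e" if e: "e > 0" for e
  proof -
    obtain N1 where N1: "\<forall>k\<ge>N1. \<forall>x\<in>L. infdist x (LL (r k)) < e/2" using L6[of "e/2"] e by auto
    obtain N2 where N2: "\<forall>k\<ge>N2. 1 / real (Suc k) < e/2" using inv_Suc_small[of "e/2"] e by auto
    show ?thesis
    proof (intro exI allI impI)
      fix k assume "max N1 N2 \<le> k"
      then have "infdist x (LL (r k)) < e/2" "1 / real (Suc k) < e/2" using N1 N2 xL by auto
      then show "dist x (xs k) < e" using xsd[of k] by linarith
    qed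
  qed
  define CC where "CC k = comp_fib (xs k) (G (r k)) f (z (r k))" for k
  have xsf: "f (xs k) = z (r k)" for k using xsL LLf by auto
  have xsCC: "xs k \<in> CC k" for k unfolding CC_def comp_fib_def using xsf by auto
  have CCsub: "CC k \<subseteq> G (r k) -` {G (r k) (xs k)} \<inter> f -` {z (r k)}" for k
    unfolding CC_def comp_fib_def using connected_component_subset by blast
  have CCT: "CC k \<subseteq> T" for k using CCsub[of k] unfolding T_def by auto
  have CCc: "compact (CC k)" for k unfolding CC_def by (rule comp_fib_compact[OF pf Gc])
  have CCne: "CC k \<noteq> {}" for k using xsCC by auto
  have CCconn: "connected (CC k)" for k unfolding CC_def comp_fib_def by simp
  obtain r2 C' where r2: "strict_mono (r2::nat\<Rightarrow>nat)" and C'ne: "C' \<noteq> {}" and C'T: "C' \<subseteq> T"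
    and C5: "\<And>\<eta>. \<eta> > 0 \<Longrightarrow> \<exists>N. \<forall>k\<ge>N. CC (r2 k) \<subseteq> nbhd C' \<eta>"
    and C6: "\<And>\<eta>. \<eta> > 0 \<Longrightarrow> \<exists>N. \<forall>k\<ge>N. \<forall>x\<in>C'. infdist x (CC (r2 k)) < \<eta>"
    and C'conn: "connected C'"
    and C2: "\<And>x. x \<in> T \<Longrightarrow> (\<And>e N. e > 0 \<Longrightarrow> \<exists>k\<ge>N. infdist x (CC (r2 k)) < e) \<Longrightarrow> x \<in> C'"
    by (rule hlim[where S=CC and T=T, OF cT CCT CCc CCne]) (use CCconn in blast)
  have xT: "x \<in> T" using xL LT by auto
  have xC': "x \<in> C'"
  proof (rule C2[OF xT])
    fix e :: real and N assume e: "e > 0"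
    obtain N1 where N1: "\<forall>k\<ge>N1. dist x (xs (r2 k)) < e" using ev_sub[OF r2 X1[OF e]] by blast
    define k where "k = max N N1"
    have "infdist x (CC (r2 k)) \<le> dist x (xs (r2 k))" by (rule infdist_le[OF xsCC])
    also have "\<dots> < e" using N1 k_def by auto
    finally have "infdist x (CC (r2 k)) < e" .
    moreover have "k \<ge> N" using k_def by simp
    ultimately show "\<exists>k\<ge>N. infdist x (CC (r2 k)) < e" by blast
  qed
  have C'SS: "C' \<subseteq> g -` {g x} \<inter> f -` {y0}"
  proof
    fix c assume cC'': "c \<in> C'"
    have fc: "dist (f c) y0 \<le> 0"
    proof (rule le_by_eps)
      fix e :: real assume e: "e > 0"
      obtain d where d: "d > 0" "\<And>y. dist y c < d \<Longrightarrow> dist (f y) (f c) < e/2"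
        using cont_pt[OF cf, of "e/2"] e by auto
      obtain N1 where N1: "\<forall>k\<ge>N1. \<forall>x\<in>C'. infdist x (CC (r2 k)) < d" using C6[OF d(1)] by blast
      obtain N2 where N2: "\<forall>k\<ge>N2. 1 / real (Suc (r (r2 k))) < e/2"
        using ev_sub[OF r2 rinv[of "e/2"]] e by auto
      define k where "k = max N1 N2"
      have "infdist c (CC (r2 k)) < d" using N1 cC'' k_def by auto
      note hh = this
      obtain w where w: "w \<in> CC (r2 k)" "dist c w < d" using infdist_lessE[OF CCne hh] by blast
      have "f w = z (r (r2 k))" using w CCsub by blast
      moreover have "dist (f w) (f c) < e/2" using d(2)[of w] w by (simp add: dist_commute)
      moreover have "dist (z (r (r2 k))) y0 < e/2" using zd[of "r (r2 k)"] N2 k_def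
        by (meson max.cobounded2 less_trans)
      ultimately show "dist (f c) y0 < 0 + e"
        using dist_triangle[of "f c" y0 "f w"] dist_commute[of "f c" "f w"] by simp
    qed
    have gcx: "dist (g c) (g x) \<le> 0"
    proof (rule le_by_eps)
      fix e :: real assume e: "e > 0"
      obtain d1 where d1: "d1 > 0" "\<And>y. dist y c < d1 \<Longrightarrow> dist (g y) (g c) < e/4"
        using cont_pt[OF cg, of "e/4"] e by auto
      obtain d2 where d2: "d2 > 0" "\<And>y. dist y x < d2 \<Longrightarrow> dist (g y) (g x) < e/4"
        using cont_pt[OF cg, of "e/4"] e by auto
      obtain N1 where N1: "\<forall>k\<ge>N1. \<forall>x\<in>C'. infdist x (CC (r2 k)) < d1" using C6[OF d1(1)] by blast
      obtain N2 where N2: "\<forall>k\<ge>N2. 1 / real (Suc (r (r2 k))) < e/4"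
        using ev_sub[OF r2 rinv[of "e/4"]] e by auto
      obtain N3 where N3: "\<forall>k\<ge>N3. dist x (xs (r2 k)) < d2" using ev_sub[OF r2 X1[OF d2(1)]] by blast
      define k where "k = max N1 (max N2 N3)"
      have "infdist c (CC (r2 k)) < d1" using N1 cC'' k_def by auto
      note hh = this
      obtain w where w: "w \<in> CC (r2 k)" "dist c w < d1" using infdist_lessE[OF CCne hh] by blast
      have wG: "G (r (r2 k)) w = G (r (r2 k)) (xs (r2 k))" and wf: "f w = z (r (r2 k))"
        using w CCsub by blast+
      have s: "1 / real (Suc (r (r2 k))) < e/4" using N2 k_def by auto
      have "dist (g w) (g c) < e/4" using d1(2)[of w] w by (simp add: dist_commute)
      moreover have "dist (G (r (r2 k)) w) (g w) < e/4" using Gd[OF wf] s by linarith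
      moreover have "dist (G (r (r2 k)) (xs (r2 k))) (g (xs (r2 k))) < e/4"
        using Gd[OF xsf[of "r2 k"]] s by linarith
      moreover have "dist x (xs (r2 k)) < d2" using N3 k_def by simp
      then have "dist (g (xs (r2 k))) (g x) < e/4" using d2(2)[of "xs (r2 k)"] by (simp add: dist_commute)
      moreover have "dist (g c) (g x) \<le> dist (g w) (g c) + dist (G (r (r2 k)) w) (g w)
          + dist (G (r (r2 k)) (xs (r2 k))) (g (xs (r2 k))) + dist (g (xs (r2 k))) (g x)"
        using wG dist_triangle[of "g c" "g x" "g w"] dist_triangle[of "g w" "g x" "G (r (r2 k)) w"]
          dist_triangle[of "G (r (r2 k)) w" "g x" "g (xs (r2 k))"] dist_commute[of "g c" "g w"]
          dist_commute[of "g w" "G (r (r2 k)) w"] by simp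
      ultimately show "dist (g c) (g x) < 0 + e" by linarith
    qed
    show "c \<in> g -` {g x} \<inter> f -` {y0}" using fc gcx by simp
  qed
  have C'C: "C' \<subseteq> C" unfolding C_def comp_fib_def
    by (rule connected_component_maximal[OF xC' C'conn C'SS])
  obtain N1 where N1: "\<forall>k\<ge>N1. CC (r2 k) \<subseteq> nbhd C' \<eta>" using C5[OF \<eta>] by blast
  obtain N2 where N2: "\<forall>k\<ge>N2. \<forall>x\<in>L. infdist x (LL (r (r2 k))) < \<eta>"
    using ev_sub[OF r2 L6[OF \<eta>]] by blast
  define k where "k = max N1 N2"
  define kk where "kk = r2 k"
  have "CC kk \<subseteq> nbhd (LL (r kk)) (1 / real m)"
  proof
    fix v assume v: "v \<in> CC kk"
    moreover have "CC kk \<subseteq> nbhd C' \<eta>" using N1 k_def kk_def by simp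
    ultimately have "infdist v C' < \<eta>" unfolding nbhd_def by blast
    from infdist_lessE[OF C'ne this] obtain c' where c': "c' \<in> C'" "dist v c' < \<eta>" by blast
    have "infdist c' L \<le> c0" using cmax C'C c' unfolding c0_def by auto
    then have "infdist c' L < c0 + \<eta>" using \<eta> by linarith
    note hh = this
      obtain l where l: "l \<in> L" "dist c' l < c0 + \<eta>" using infdist_lessE[OF Lne hh] by blast
    have "infdist l (LL (r kk)) < \<eta>" using N2 k_def kk_def l by auto
    moreover have "infdist v (LL (r kk)) \<le> infdist l (LL (r kk)) + dist v l" by (rule infdist_triangle)
    moreover have "dist v l \<le> dist v c' + dist c' l" by (rule dist_triangle)
    ultimately have "infdist v (LL (r kk)) < 1 / real m" using c' l \<eta>3 by linarith
    then show "v \<in> nbhd (LL (r kk)) (1 / real m)" unfolding nbhd_def by simp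
  qed
  then show False using LLc[OF xsL[of kk]] unfolding CC_def by blast
qed

definition Qg :: "('a::metric_space \<Rightarrow> 'b) \<Rightarrow> ('a \<Rightarrow> 'c::metric_space) \<Rightarrow> nat \<Rightarrow> nat \<Rightarrow> 'b \<Rightarrow> real \<Rightarrow> bool" where
  "Qg f g m n z t \<longleftrightarrow> (\<forall>g'\<in>cmaps. (\<forall>x. f x = z \<longrightarrow> dist (g' x) (g x) < t) \<longrightarrow> g' \<in> Kset f m n z)"

lemma Qg_mono: "Qg f g m n z t \<Longrightarrow> t' \<le> t \<Longrightarrow> Qg f g m n z t'"
  unfolding Qg_def by (meson less_le_trans)

definition Dg :: "('a::metric_space \<Rightarrow> 'b::metric_space) \<Rightarrow> ('a \<Rightarrow> 'c::metric_space) \<Rightarrow> nat \<Rightarrow> nat \<Rightarrow> 'b set \<Rightarrow> 'b \<Rightarrow> real \<Rightarrow> bool" where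
  "Dg f g m n H y t \<longleftrightarrow> 0 < t \<and> t \<le> 1 \<and> (\<forall>z\<in>H. dist z y < t \<longrightarrow> Qg f g m n z t)"

lemma Dg_move: "Dg f g m n H y t \<Longrightarrow> dist y y' < t/2 \<Longrightarrow> Dg f g m n H y' (t/2)"
  unfolding Dg_def
proof (intro conjI ballI impI)
  fix z assume a: "0 < t \<and> t \<le> 1 \<and> (\<forall>z\<in>H. dist z y < t \<longrightarrow> Qg f g m n z t)"
    and d: "dist y y' < t/2" and z: "z \<in> H" and dz: "dist z y' < t/2"
  have "dist z y \<le> dist z y' + dist y y'" by (metis dist_commute dist_triangle)
  then have "dist z y < t" using d dz by linarith
  then show "Qg f g m n z (t/2)" using a z Qg_mono[of f g m n z t "t/2"] by auto
qed (auto)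

lemma Dg_exists:
  fixes f :: "'a::metric_space \<Rightarrow> 'b::metric_space" and g :: "'a \<Rightarrow> 'c::metric_space"
  assumes pf: "perfect_map f" and H: "closed H" and gK: "g \<in> KsetH f m n H"
    and m1: "m \<ge> 1" and n1: "n \<ge> 1"
  shows "\<exists>t. Dg f g m n H y t"
proof (cases "y \<in> H")
  case True
  have gc: "g \<in> cmaps" and gy: "g \<in> Kset f m n y" using gK True unfolding KsetH_def by auto
  obtain t0 where t0: "t0 > 0" "\<And>z. dist z y < t0 \<Longrightarrow> Qg f g m n z t0"
    using local_lemma[OF pf gc gy m1 n1] unfolding Qg_def by blast
  show ?thesis
  proof (intro exI[of _ "min t0 1"])
    show "Dg f g m n H y (min t0 1)" unfolding Dg_def
      using t0 Qg_mono[of f g m n _ t0 "min t0 1"] by auto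
  qed
next
  case False
  have "open (- H)" using H by (simp add: open_Compl)
  then obtain r where r: "r > 0" "ball y r \<subseteq> - H" using False open_contains_ball by blast
  show ?thesis
  proof (intro exI[of _ "min r 1"])
    have "\<And>z. z \<in> H \<Longrightarrow> \<not> dist z y < min r 1"
    proof
      fix z assume "z \<in> H" "dist z y < min r 1"
      then have "z \<in> ball y r" by (simp add: dist_commute)
      then show False using r \<open>z \<in> H\<close> by blast
    qed
    then show "Dg f g m n H y (min r 1)" unfolding Dg_def using r by auto
  qed
qed

lemma eps_exists:
  fixes f :: "'a::metric_space \<Rightarrow> 'b::metric_space" and g :: "'a \<Rightarrow> 'c::metric_space"
  assumes pf: "perfect_map f" and H: "closed H" and gK: "g \<in> KsetH f m n H"
    and m1: "m \<ge> 1" and n1: "n \<ge> 1"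
  obtains e where "continuous_on UNIV e" "\<And>y. 0 < e y" "\<And>y. e y \<le> 1"
    "\<And>z. z \<in> H \<Longrightarrow> Qg f g m n z (e z)"
proof -
  define D where "D = Dg f g m n H"
  have Dex: "\<exists>t. D y t" for y using Dg_exists[OF pf H gK m1 n1] D_def by blast
  have D1: "D y t \<Longrightarrow> 0 < t \<and> t \<le> 1" for y t unfolding D_def Dg_def by auto
  define \<psi> where "\<psi> y = Sup {t. D y t}" for y
  have bdd: "bdd_above {t. D y t}" for y using D1 by (intro bdd_aboveI[of _ 1]) auto
  have ne: "{t. D y t} \<noteq> {}" for y using Dex by auto
  have \<psi>ge: "D y t \<Longrightarrow> t \<le> \<psi> y" for y t unfolding \<psi>_def using bdd by (intro cSup_upper) auto
  have \<psi>le: "\<psi> y \<le> 1" for y unfolding \<psi>_def using ne D1 by (intro cSup_least) auto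
  have \<psi>pos: "\<psi> y > 0" for y
  proof -
    obtain t where "D y t" using Dex by blast
    then show ?thesis using \<psi>ge D1 by (meson less_le_trans)
  qed
  define e0 where "e0 y = (INF y'. \<psi> y' + dist y y')" for y
  have bddb: "bdd_below (range (\<lambda>y'. \<psi> y' + dist y y'))" for y
  proof (rule bdd_belowI[of _ 0])
    fix v assume "v \<in> range (\<lambda>y'. \<psi> y' + dist y y')"
    then obtain y' where "v = \<psi> y' + dist y y'" by blast
    then show "0 \<le> v" using \<psi>pos[of y'] zero_le_dist[of y y'] by linarith
  qed
  have e0le: "e0 y \<le> \<psi> y' + dist y y'" for y y'
    unfolding e0_def by (rule cINF_lower[OF bddb]) simp
  have e0pos: "e0 y > 0" for y
  proof -
    obtain t where t: "D y t" using Dex by blast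
    have "t/2 \<le> \<psi> y' + dist y y'" for y'
    proof (cases "dist y y' < t/2")
      case True
      then have "D y' (t/2)" using Dg_move t D_def by blast
      then show ?thesis using \<psi>ge[of y' "t/2"] zero_le_dist[of y y'] by linarith
    next
      case False
      then show ?thesis using \<psi>pos[of y'] by simp
    qed
    then have "t/2 \<le> e0 y" unfolding e0_def by (intro cINF_greatest) auto
    then show ?thesis using D1[OF t] by linarith
  qed
  have e0lip: "e0 y \<le> e0 y1 + dist y y1" for y y1
  proof -
    have "e0 y - dist y y1 \<le> \<psi> y' + dist y1 y'" for y'
      using e0le[of y y'] dist_triangle[of y y' y1] by (simp add: dist_commute)
    then have "e0 y - dist y y1 \<le> e0 y1" unfolding e0_def[of y1] by (intro cINF_greatest) auto
    then show ?thesis by simp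
  qed
  have e0cont: "continuous_on UNIV e0"
    unfolding continuous_on_iff
  proof (intro ballI allI impI)
    fix x and e :: real assume "0 < e"
    show "\<exists>d>0. \<forall>x'\<in>UNIV. dist x' x < d \<longrightarrow> dist (e0 x') (e0 x) < e"
    proof (intro exI[of _ e] conjI ballI impI)
      fix x' assume "dist x' x < e"
      then show "dist (e0 x') (e0 x) < e"
        using e0lip[of x' x] e0lip[of x x'] by (simp add: dist_real_def dist_commute abs_less_iff)
    qed (use \<open>0 < e\<close> in auto)
  qed
  define e where "e y = e0 y / 2" for y
  show thesis
  proof (rule that[of e])
    show "continuous_on UNIV e" unfolding e_def by (intro continuous_intros e0cont) auto
    show "0 < e y" for y using e0pos[of y] by (simp add: e_def)
    show "e y \<le> 1" for y using e0le[of y y] \<psi>le[of y] e0pos[of y] by (simp add: e_def)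
    show "Qg f g m n z (e z)" if z: "z \<in> H" for z
    proof -
      have "e z < \<psi> z" using e0le[of z z] e0pos[of z] by (simp add: e_def)
      then obtain t where t: "D z t" "e z < t"
        using less_cSup_iff[OF ne bdd] unfolding \<psi>_def by blast
      then have "Qg f g m n z t" using z unfolding D_def Dg_def by auto
      then show ?thesis using Qg_mono t(2) by (meson less_imp_le)
    qed
  qed
qed

theorem proposition2p4:
  fixes f :: "'a::metric_space \<Rightarrow> 'b::metric_space"
    and H :: "'b set" and m n :: nat
  assumes "perfect_map f"
    and "closed H"
    and "m \<ge> 1" and "n \<ge> 1"
  shows "openin (source_limitation_topology :: ('a \<Rightarrow> 'c::complete_space) topology) (KsetH f m n H)"
  unfolding source_limitation_topology_def openin_subopen[of _ "KsetH f m n H"]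
proof (intro ballI)
  fix g :: "'a \<Rightarrow> 'c" assume gK: "g \<in> KsetH f m n H"
  have gc: "g \<in> cmaps" using gK by (simp add: KsetH_def)
  obtain e where ec: "continuous_on UNIV e" and epos: "\<And>y. 0 < e y" and e1: "\<And>y. e y \<le> 1"
    and eQ: "\<And>z. z \<in> H \<Longrightarrow> Qg f g m n z (e z)"
    using eps_exists[OF assms(1,2) gK assms(3,4)] by blast
  define \<epsilon> where "\<epsilon> x = e (f x)" for x
  have cf: "continuous_on UNIV f" using assms(1) by (simp add: perfect_map_def)
  have c\<epsilon>: "continuous_on UNIV \<epsilon>" unfolding \<epsilon>_def
    using continuous_on_compose[OF cf continuous_on_subset[OF ec]] by (simp add: o_def)
  have B: "sl_ball g \<epsilon> \<in> {sl_ball g \<epsilon> | g \<epsilon>. g \<in> cmaps \<and> continuous_on UNIV \<epsilon> \<and> (\<forall>x. 0 < \<epsilon> x \<and> \<epsilon> x \<le> 1)}"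
    using gc c\<epsilon> epos e1 unfolding \<epsilon>_def by blast
  have "g \<in> sl_ball g \<epsilon>" using gc epos unfolding sl_ball_def \<epsilon>_def by simp
  moreover have "sl_ball g \<epsilon> \<subseteq> KsetH f m n H"
  proof
    fix g' assume g': "g' \<in> sl_ball g \<epsilon>"
    then have g'c: "g' \<in> cmaps" and g'd: "\<And>x. dist (g' x) (g x) < e (f x)"
      unfolding sl_ball_def \<epsilon>_def by auto
    have "g' \<in> Kset f m n z" if z: "z \<in> H" for z
      using eQ[OF z] g'c g'd unfolding Qg_def by auto
    then show "g' \<in> KsetH f m n H" using g'c unfolding KsetH_def by auto
  qed
  ultimately show "\<exists>T. openin (topology_generated_by
      {sl_ball g \<epsilon> | g \<epsilon>. g \<in> cmaps \<and> continuous_on UNIV \<epsilon> \<and> (\<forall>x. 0 < \<epsilon> x \<and> \<epsilon> x \<le> 1)}) T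
      \<and> g \<in> T \<and> T \<subseteq> KsetH f m n H"
    using topology_generated_by_Basis[OF B] by blast
qed

end
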